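(* Let $H$ be a Hopf algebra with bijective antipode and $(H_i)_{0\le i\le n}$ a decreasing Hopf algebra filtration of $H$ with $H_n=\{0\}$ (and $H_i=0$ for $i\ge n$). Let $V$ be a Yetter--Drinfeld module over $H$ with coaction $\delta$, and put $\mathcal F^iV=H_iV$ for all $i\ge0$. Then $\delta(\mathcal F^iV)\subseteq\sum_{k\ge0}H_k\otimes\mathcal F^{i-k}V$ for all $i\ge0$, and $(\mathcal F^iV)_{i\ge0}$ is a decreasing filtration of the braided vector space $V$.
   Context: A decreasing Hopf algebra filtration of $H$ is a family of subspaces $(H_i)_{i\ge0}$ with $H_0=H$, $H_i\supseteq H_j$ for $i\le j$, $H_iH_j\subseteq H_{i+j}$, $\Delta(H_i)\subseteq\sum_{j=0}^iH_j\otimes H_{i-j}$, and $\varepsilon(H_i)=0$, $S(H_i)\subseteq H_i$ for $i\ge1$. The braiding of $V$ is $c(v\otimes w)=v_{(-1)}w\otimes v_{(0)}$. A decreasing filtration of a braided vector space $(V,c)$ is a family $(\mathcal F^iV)_{i\ge0}$ with $V=\mathcal F^0V\supseteq\mathcal F^kV\supseteq\mathcal F^lV$ for $k\le l$, $\bigcap_i\mathcal F^iV=0$, and $c(\mathcal F^iV\otimes\mathcal F^jV)\subseteq\sum_{k+l\ge i+j}\mathcal F^kV\otimes\mathcal F^lV$. Here $\mathcal F^{j}V=V$ for $j<0$. *)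

theory Defs
  imports Complex_Main "HOL-Library.Poly_Mapping"
begin

text \<open>An element of A \<otimes> B is represented by an element of the free vector space
  over A \<times> B (finitely supported functions), and two representatives are identified
  modulo the subspace spanned by the bilinearity relations.\<close>

definition fsc :: "'k::field \<Rightarrow> ('a \<Rightarrow>\<^sub>0 'k) \<Rightarrow> ('a \<Rightarrow>\<^sub>0 'k)" where
  "fsc c x = Poly_Mapping.map (\<lambda>y. c * y) x"

definition fspan :: "('a \<Rightarrow>\<^sub>0 'k::field) set \<Rightarrow> ('a \<Rightarrow>\<^sub>0 'k) set" where
  "fspan G = module.span fsc G"

definition ft :: "'a \<Rightarrow> 'b \<Rightarrow> ('a \<times> 'b \<Rightarrow>\<^sub>0 'k::field)" where
  "ft a b = Poly_Mapping.single (a, b) 1"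

definition ft3 :: "'a \<Rightarrow> 'b \<Rightarrow> 'c \<Rightarrow> ('a \<times> 'b \<times> 'c \<Rightarrow>\<^sub>0 'k::field)" where
  "ft3 a b c = Poly_Mapping.single (a, b, c) 1"

definition flift :: "('a \<Rightarrow> 'c::ab_group_add) \<Rightarrow> ('k::field \<Rightarrow> 'c \<Rightarrow> 'c) \<Rightarrow> ('a \<Rightarrow>\<^sub>0 'k) \<Rightarrow> 'c" where
  "flift f s x = (\<Sum>p\<in>Poly_Mapping.keys x. s (Poly_Mapping.lookup x p) (f p))"

definition tens_rel2 ::
  "('k::field \<Rightarrow> 'a::ab_group_add \<Rightarrow> 'a) \<Rightarrow> ('k \<Rightarrow> 'b::ab_group_add \<Rightarrow> 'b) \<Rightarrow> ('a \<times> 'b \<Rightarrow>\<^sub>0 'k) set" where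
  "tens_rel2 sA sB = fspan
     ({ft (a + a') b - ft a b - ft a' b | a a' b. True}
    \<union> {ft a (b + b') - ft a b - ft a b' | a b b'. True}
    \<union> {ft (sA c a) b - fsc c (ft a b) | c a b. True}
    \<union> {ft a (sB c b) - fsc c (ft a b) | c a b. True})"

definition tens_rel3 ::
  "('k::field \<Rightarrow> 'a::ab_group_add \<Rightarrow> 'a) \<Rightarrow> ('k \<Rightarrow> 'b::ab_group_add \<Rightarrow> 'b)
    \<Rightarrow> ('k \<Rightarrow> 'c::ab_group_add \<Rightarrow> 'c) \<Rightarrow> ('a \<times> 'b \<times> 'c \<Rightarrow>\<^sub>0 'k) set" where
  "tens_rel3 sA sB sC = fspan
     ({ft3 (a + a') b c - ft3 a b c - ft3 a' b c | a a' b c. True}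
    \<union> {ft3 a (b + b') c - ft3 a b c - ft3 a b' c | a b b' c. True}
    \<union> {ft3 a b (c + c') - ft3 a b c - ft3 a b c' | a b c c'. True}
    \<union> {ft3 (sA r a) b c - fsc r (ft3 a b c) | r a b c. True}
    \<union> {ft3 a (sB r b) c - fsc r (ft3 a b c) | r a b c. True}
    \<union> {ft3 a b (sC r c) - fsc r (ft3 a b c) | r a b c. True})"

definition teq2 where
  "teq2 sA sB x y \<longleftrightarrow> x - y \<in> tens_rel2 sA sB"

definition teq3 where
  "teq3 sA sB sC x y \<longleftrightarrow> x - y \<in> tens_rel3 sA sB sC"

text \<open>The class of x in A \<otimes> B lies in the subspace spanned by the pure tensors in G.\<close>
definition tmem2 where
  "tmem2 sA sB x G \<longleftrightarrow> (\<exists>w\<in>fspan G. x - w \<in> tens_rel2 sA sB)"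

definition hopf_algebra ::
  "('k::field \<Rightarrow> 'h::ab_group_add \<Rightarrow> 'h) \<Rightarrow> ('h \<Rightarrow> 'h \<Rightarrow> 'h) \<Rightarrow> 'h
    \<Rightarrow> ('h \<Rightarrow> ('h \<times> 'h \<Rightarrow>\<^sub>0 'k)) \<Rightarrow> ('h \<Rightarrow> 'k) \<Rightarrow> ('h \<Rightarrow> 'h) \<Rightarrow> bool" where
  "hopf_algebra sH mult one Delta eps S \<longleftrightarrow>
     vector_space sH
   \<comment> \<open>associative unital algebra\<close>
   \<and> (\<forall>a b c. mult (a + b) c = mult a c + mult b c)
   \<and> (\<forall>a b c. mult a (b + c) = mult a b + mult a c)
   \<and> (\<forall>r a b. mult (sH r a) b = sH r (mult a b))
   \<and> (\<forall>r a b. mult a (sH r b) = sH r (mult a b))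
   \<and> (\<forall>a b c. mult (mult a b) c = mult a (mult b c))
   \<and> (\<forall>a. mult one a = a \<and> mult a one = a)
   \<comment> \<open>coassociative counital coalgebra\<close>
   \<and> (\<forall>a b. teq2 sH sH (Delta (a + b)) (Delta a + Delta b))
   \<and> (\<forall>r a. teq2 sH sH (Delta (sH r a)) (fsc r (Delta a)))
   \<and> (\<forall>h. teq3 sH sH sH
          (flift (\<lambda>(a, b). flift (\<lambda>(a1, a2). ft3 a1 a2 b) fsc (Delta a)) fsc (Delta h))
          (flift (\<lambda>(a, b). flift (\<lambda>(b1, b2). ft3 a b1 b2) fsc (Delta b)) fsc (Delta h)))
   \<and> (\<forall>a b. eps (a + b) = eps a + eps b)
   \<and> (\<forall>r a. eps (sH r a) = r * eps a)
   \<and> (\<forall>h. flift (\<lambda>(a, b). sH (eps a) b) sH (Delta h) = h)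
   \<and> (\<forall>h. flift (\<lambda>(a, b). sH (eps b) a) sH (Delta h) = h)
   \<comment> \<open>bialgebra compatibility\<close>
   \<and> (\<forall>a b. teq2 sH sH (Delta (mult a b))
          (flift (\<lambda>(a1, a2). flift (\<lambda>(b1, b2). ft (mult a1 b1) (mult a2 b2)) fsc (Delta b))
             fsc (Delta a)))
   \<and> teq2 sH sH (Delta one) (ft one one)
   \<and> (\<forall>a b. eps (mult a b) = eps a * eps b)
   \<and> eps one = 1
   \<comment> \<open>antipode\<close>
   \<and> (\<forall>a b. S (a + b) = S a + S b)
   \<and> (\<forall>r a. S (sH r a) = sH r (S a))
   \<and> (\<forall>h. flift (\<lambda>(a, b). mult (S a) b) sH (Delta h) = sH (eps h) one)
   \<and> (\<forall>h. flift (\<lambda>(a, b). mult a (S b)) sH (Delta h) = sH (eps h) one)"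

definition hopf_filtration ::
  "('k::field \<Rightarrow> 'h::ab_group_add \<Rightarrow> 'h) \<Rightarrow> ('h \<Rightarrow> 'h \<Rightarrow> 'h)
    \<Rightarrow> ('h \<Rightarrow> ('h \<times> 'h \<Rightarrow>\<^sub>0 'k)) \<Rightarrow> ('h \<Rightarrow> 'k) \<Rightarrow> ('h \<Rightarrow> 'h) \<Rightarrow> (nat \<Rightarrow> 'h set) \<Rightarrow> bool" where
  "hopf_filtration sH mult Delta eps S Hf \<longleftrightarrow>
     (\<forall>i. module.subspace sH (Hf i))
   \<and> Hf 0 = UNIV
   \<and> (\<forall>i j. i \<le> j \<longrightarrow> Hf j \<subseteq> Hf i)
   \<and> (\<forall>i j a b. a \<in> Hf i \<longrightarrow> b \<in> Hf j \<longrightarrow> mult a b \<in> Hf (i + j))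
   \<and> (\<forall>i h. h \<in> Hf i \<longrightarrow>
        tmem2 sH sH (Delta h) {ft a b | a b j. j \<le> i \<and> a \<in> Hf j \<and> b \<in> Hf (i - j)})
   \<and> (\<forall>i h. 1 \<le> i \<longrightarrow> h \<in> Hf i \<longrightarrow> eps h = 0 \<and> S h \<in> Hf i)"

text \<open>Left-left Yetter--Drinfeld module; the compatibility is
  delta(h v) = h(1) v(-1) S(h(3)) \<otimes> h(2) v(0).\<close>
definition yd_module ::
  "('k::field \<Rightarrow> 'h::ab_group_add \<Rightarrow> 'h) \<Rightarrow> ('h \<Rightarrow> 'h \<Rightarrow> 'h) \<Rightarrow> 'h
    \<Rightarrow> ('h \<Rightarrow> ('h \<times> 'h \<Rightarrow>\<^sub>0 'k)) \<Rightarrow> ('h \<Rightarrow> 'k) \<Rightarrow> ('h \<Rightarrow> 'h)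
    \<Rightarrow> ('k \<Rightarrow> 'v::ab_group_add \<Rightarrow> 'v) \<Rightarrow> ('h \<Rightarrow> 'v \<Rightarrow> 'v) \<Rightarrow> ('v \<Rightarrow> ('h \<times> 'v \<Rightarrow>\<^sub>0 'k)) \<Rightarrow> bool" where
  "yd_module sH mult one Delta eps S sV act delta \<longleftrightarrow>
     vector_space sV
   \<comment> \<open>left module\<close>
   \<and> (\<forall>a b v. act (a + b) v = act a v + act b v)
   \<and> (\<forall>a v w. act a (v + w) = act a v + act a w)
   \<and> (\<forall>r a v. act (sH r a) v = sV r (act a v))
   \<and> (\<forall>r a v. act a (sV r v) = sV r (act a v))
   \<and> (\<forall>v. act one v = v)
   \<and> (\<forall>a b v. act (mult a b) v = act a (act b v))
   \<comment> \<open>left comodule\<close>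
   \<and> (\<forall>v w. teq2 sH sV (delta (v + w)) (delta v + delta w))
   \<and> (\<forall>r v. teq2 sH sV (delta (sV r v)) (fsc r (delta v)))
   \<and> (\<forall>v. flift (\<lambda>(a, x). sV (eps a) x) sV (delta v) = v)
   \<and> (\<forall>v. teq3 sH sH sV
          (flift (\<lambda>(a, x). flift (\<lambda>(a1, a2). ft3 a1 a2 x) fsc (Delta a)) fsc (delta v))
          (flift (\<lambda>(a, x). flift (\<lambda>(b, y). ft3 a b y) fsc (delta x)) fsc (delta v)))
   \<comment> \<open>Yetter--Drinfeld compatibility\<close>
   \<and> (\<forall>h v. teq2 sH sV (delta (act h v))
          (flift (\<lambda>(h1, h23). flift (\<lambda>(h2, h3).
              flift (\<lambda>(a, x). ft (mult (mult h1 a) (S h3)) (act h2 x)) fsc (delta v))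
            fsc (Delta h23)) fsc (Delta h)))"

text \<open>The braiding c(v \<otimes> w) = v(-1) w \<otimes> v(0), extended linearly to representatives.\<close>
definition yd_braiding ::
  "('h \<Rightarrow> 'v \<Rightarrow> 'v) \<Rightarrow> ('v \<Rightarrow> ('h \<times> 'v \<Rightarrow>\<^sub>0 'k::field)) \<Rightarrow> ('v \<times> 'v \<Rightarrow>\<^sub>0 'k) \<Rightarrow> ('v \<times> 'v \<Rightarrow>\<^sub>0 'k)" where
  "yd_braiding act delta x =
     flift (\<lambda>(v, w). flift (\<lambda>(a, y). ft (act a w) y) fsc (delta v)) fsc x"

definition yd_filt ::
  "('k::field \<Rightarrow> 'v::ab_group_add \<Rightarrow> 'v) \<Rightarrow> ('h \<Rightarrow> 'v \<Rightarrow> 'v) \<Rightarrow> (nat \<Rightarrow> 'h set) \<Rightarrow> int \<Rightarrow> 'v set" where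
  "yd_filt sV act Hf i =
     (if i < 0 then UNIV else module.span sV {act h v | h v. h \<in> Hf (nat i)})"

definition braided_vs_filtration ::
  "('k::field \<Rightarrow> 'v::ab_group_add \<Rightarrow> 'v) \<Rightarrow> (('v \<times> 'v \<Rightarrow>\<^sub>0 'k) \<Rightarrow> ('v \<times> 'v \<Rightarrow>\<^sub>0 'k))
    \<Rightarrow> (nat \<Rightarrow> 'v set) \<Rightarrow> bool" where
  "braided_vs_filtration sV c F \<longleftrightarrow>
     (\<forall>i. module.subspace sV (F i))
   \<and> F 0 = UNIV
   \<and> (\<forall>k l. k \<le> l \<longrightarrow> F l \<subseteq> F k)
   \<and> (\<Inter>i. F i) = {0}
   \<and> (\<forall>i j. \<forall>x \<in> fspan {ft v w | v w. v \<in> F i \<and> w \<in> F j}.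
        tmem2 sV sV (c x) {ft v w | v w k l. i + j \<le> k + l \<and> v \<in> F k \<and> w \<in> F l})"

end

theory Submission
  imports Defs
begin


lemma lookup_fsc [simp]: "Poly_Mapping.lookup (fsc c x) p = c * Poly_Mapping.lookup x p"
  unfolding fsc_def by (simp add: Poly_Mapping.map.rep_eq when_def)

interpretation fv: vector_space "fsc :: 'k::field \<Rightarrow> ('a \<Rightarrow>\<^sub>0 'k) \<Rightarrow> ('a \<Rightarrow>\<^sub>0 'k)"
  by unfold_locales (auto intro!: poly_mapping_eqI simp: lookup_add algebra_simps)

lemma fspan_eq: "fspan = fv.span" by (simp add: fspan_def fun_eq_iff)

lemma flift_alt:
  assumes "finite K" "Poly_Mapping.keys x \<subseteq> K"
  shows "flift f fsc x = (\<Sum>p\<in>K. fsc (Poly_Mapping.lookup x p) (f p))"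
  unfolding flift_def
  by (rule sum.mono_neutral_left) (use assms in \<open>auto simp: in_keys_iff\<close>)

lemma flift_add: "flift f fsc (x + y) = flift f fsc x + flift f fsc y"
proof -
  let ?K = "Poly_Mapping.keys x \<union> Poly_Mapping.keys y"
  have "flift f fsc (x + y) = (\<Sum>p\<in>?K. fsc (Poly_Mapping.lookup (x+y) p) (f p))"
    by (rule flift_alt) (auto dest: keys_add[THEN subsetD])
  also have "\<dots> = (\<Sum>p\<in>?K. fsc (Poly_Mapping.lookup x p) (f p)) + (\<Sum>p\<in>?K. fsc (Poly_Mapping.lookup y p) (f p))"
    by (simp add: lookup_add fv.scale_left_distrib sum.distrib)
  also have "\<dots> = flift f fsc x + flift f fsc y"
    by (subst (1 2) flift_alt[symmetric]) auto
  finally show ?thesis .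
qed

lemma flift_fsc: "flift f fsc (fsc c x) = fsc c (flift f fsc x)"
proof -
  have "flift f fsc (fsc c x) = (\<Sum>p\<in>Poly_Mapping.keys x. fsc (Poly_Mapping.lookup (fsc c x) p) (f p))"
    by (rule flift_alt) (auto simp: in_keys_iff)
  also have "\<dots> = fsc c (flift f fsc x)"
    by (simp add: flift_def fv.scale_sum_right)
  finally show ?thesis .
qed

lemma flift_zero [simp]: "flift f fsc 0 = 0"
  by (simp add: flift_def)

lemma flift_diff: "flift f fsc (x - y) = flift f fsc x - flift f fsc y"
  by (metis add_diff_cancel_right' diff_add_cancel eq_diff_eq flift_add)

lemma flift_ft [simp]: "flift f fsc (ft a b) = f (a, b)"
  by (simp add: flift_def ft_def)

lemma flift_ft3 [simp]: "flift f fsc (ft3 a b c) = f (a, b, c)"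
  by (simp add: flift_def ft3_def)

lemma flift_fun_add: "flift (\<lambda>p. f p + g p) fsc x = flift f fsc x + flift g fsc x"
  by (simp add: flift_def sum.distrib fv.scale_right_distrib)

lemma flift_fun_diff: "flift (\<lambda>p. f p - g p) fsc x = flift f fsc x - flift g fsc x"
  by (simp add: flift_def sum_subtractf fv.scale_right_diff_distrib)

lemma flift_fun_fsc: "flift (\<lambda>p. fsc r (f p)) fsc x = fsc r (flift f fsc x)"
  by (simp add: flift_def fv.scale_sum_right mult.commute)

lemma flift_in_subspace:
  assumes "fv.subspace R" "\<And>p. f p \<in> R"
  shows "flift f fsc x \<in> R"
  unfolding flift_def using assms
  by (intro fv.subspace_sum) (auto intro: fv.subspace_scale)

lemma linear_span_into:
  assumes add: "\<And>x y. L (x + y) = L x + L y" and sc: "\<And>c x. L (fsc c x) = fsc c (L x)"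
    and T: "fv.subspace T" and G: "\<And>g. g \<in> G \<Longrightarrow> L g \<in> T" and x: "x \<in> fv.span G"
  shows "L x \<in> T"
  using x
proof (induction rule: fv.span_induct_alt)
  case base
  have "L 0 = L 0 + L 0" using add[of 0 0] by simp
  then have "L 0 = 0" by simp
  then show ?case using T by (simp add: fv.subspace_0)
next
  case (step c x y)
  then show ?case using add sc T G by (simp add: fv.subspace_add fv.subspace_scale)
qed


definition bil2 where
  "bil2 sA sB R f \<longleftrightarrow>
     (\<forall>a a' b. f (a + a', b) - f (a, b) - f (a', b) \<in> R)
   \<and> (\<forall>a b b'. f (a, b + b') - f (a, b) - f (a, b') \<in> R)
   \<and> (\<forall>c a b. f (sA c a, b) - fsc c (f (a, b)) \<in> R)
   \<and> (\<forall>c a b. f (a, sB c b) - fsc c (f (a, b)) \<in> R)"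

lemma tens_rel2_subspace: "fv.subspace (tens_rel2 sA sB)"
  by (simp add: tens_rel2_def fspan_eq)

lemma flift_rel:
  assumes R: "fv.subspace R" and b: "bil2 sA sB R f" and x: "x \<in> tens_rel2 sA sB"
  shows "flift f fsc x \<in> R"
proof (rule linear_span_into[where L="flift f fsc", OF flift_add flift_fsc R])
  show "x \<in> fv.span ({ft (a + a') b - ft a b - ft a' b | a a' b. True}
    \<union> {ft a (b + b') - ft a b - ft a b' | a b b'. True}
    \<union> {ft (sA c a) b - fsc c (ft a b) | c a b. True}
    \<union> {ft a (sB c b) - fsc c (ft a b) | c a b. True})"
    using x by (simp add: tens_rel2_def fspan_eq)
next
  fix g assume "g \<in> {ft (a + a') b - ft a b - ft a' b | a a' b. True}
    \<union> {ft a (b + b') - ft a b - ft a b' | a b b'. True}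
    \<union> {ft (sA c a) b - fsc c (ft a b) | c a b. True}
    \<union> {ft a (sB c b) - fsc c (ft a b) | c a b. True}"
  then show "flift f fsc g \<in> R"
    using b unfolding bil2_def by (auto simp: flift_diff flift_fsc)
qed

lemma rel2_gen1: "ft (a + a') b - ft a b - ft a' b \<in> tens_rel2 sA sB"
  unfolding tens_rel2_def fspan_eq by (rule fv.span_base) blast
lemma rel2_gen2: "ft a (b + b') - ft a b - ft a b' \<in> tens_rel2 sA sB"
  unfolding tens_rel2_def fspan_eq by (rule fv.span_base) blast
lemma rel2_gen3: "ft (sA c a) b - fsc c (ft a b) \<in> tens_rel2 sA sB"
  unfolding tens_rel2_def fspan_eq by (rule fv.span_base) blast
lemma rel2_gen4: "ft a (sB c b) - fsc c (ft a b) \<in> tens_rel2 sA sB"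
  unfolding tens_rel2_def fspan_eq by (rule fv.span_base) blast

lemma bil_ft:
  assumes A1: "\<And>x y. A (x + y) = A x + A y" and A2: "\<And>c x. A (sA c x) = sC c (A x)"
    and B1: "\<And>x y. B (x + y) = B x + B y" and B2: "\<And>c x. B (sB c x) = sD c (B x)"
  shows "bil2 sA sB (tens_rel2 sC sD) (\<lambda>(a, b). ft (A a) (B b))"
  unfolding bil2_def by (simp add: A1 A2 B1 B2 rel2_gen1 rel2_gen2 rel2_gen3 rel2_gen4)
lemma flift_combo3:
  assumes "fv.subspace R" "\<And>p. f p - g p - h p \<in> R"
  shows "flift f fsc x - flift g fsc x - flift h fsc x \<in> R"
proof -
  have "flift f fsc x - flift g fsc x - flift h fsc x = flift (\<lambda>p. f p - g p - h p) fsc x"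
    by (simp add: flift_fun_diff)
  then show ?thesis using flift_in_subspace[OF assms] by simp
qed

lemma flift_combo_sc:
  assumes "fv.subspace R" "\<And>p. f p - fsc c (g p) \<in> R"
  shows "flift f fsc x - fsc c (flift g fsc x) \<in> R"
proof -
  have "flift f fsc x - fsc c (flift g fsc x) = flift (\<lambda>p. f p - fsc c (g p)) fsc x"
    by (simp add: flift_fun_diff flift_fun_fsc)
  then show ?thesis using flift_in_subspace[OF assms] by simp
qed

lemma rel_add: "x \<in> tens_rel2 sA sB \<Longrightarrow> y \<in> tens_rel2 sA sB \<Longrightarrow> x + y \<in> tens_rel2 sA sB"
  using tens_rel2_subspace fv.subspace_add by blast
lemma rel_diff: "x \<in> tens_rel2 sA sB \<Longrightarrow> y \<in> tens_rel2 sA sB \<Longrightarrow> x - y \<in> tens_rel2 sA sB"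
  using tens_rel2_subspace fv.subspace_diff by blast
lemma rel_sc: "x \<in> tens_rel2 sA sB \<Longrightarrow> fsc c x \<in> tens_rel2 sA sB"
  using tens_rel2_subspace fv.subspace_scale by blast
lemma rel_0: "0 \<in> tens_rel2 sA sB"
  using tens_rel2_subspace fv.subspace_0 by blast

lemma tmem2_subspace: "fv.subspace {x. tmem2 sA sB x G}"
  unfolding fv.subspace_def tmem2_def
proof (intro conjI allI impI ballI)
  show "0 \<in> {x. \<exists>w\<in>fspan G. x - w \<in> tens_rel2 sA sB}"
    by (auto simp: fspan_eq intro!: bexI[of _ 0] fv.span_zero rel_0)
next
  fix x y assume "x \<in> {x. \<exists>w\<in>fspan G. x - w \<in> tens_rel2 sA sB}" "y \<in> {x. \<exists>w\<in>fspan G. x - w \<in> tens_rel2 sA sB}"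
  then obtain w w' where a: "w \<in> fspan G" "x - w \<in> tens_rel2 sA sB" "w' \<in> fspan G" "y - w' \<in> tens_rel2 sA sB" by auto
  have eq: "x + y - (w + w') = (x - w) + (y - w')" by (simp add: algebra_simps)
  have "x + y - (w + w') \<in> tens_rel2 sA sB" unfolding eq by (rule rel_add[OF a(2) a(4)])
  with a show "x + y \<in> {x. \<exists>w\<in>fspan G. x - w \<in> tens_rel2 sA sB}"
    by (auto simp: fspan_eq intro!: bexI[of _ "w + w'"] fv.span_add)
next
  fix c x assume "x \<in> {x. \<exists>w\<in>fspan G. x - w \<in> tens_rel2 sA sB}"
  then obtain w where a: "w \<in> fspan G" "x - w \<in> tens_rel2 sA sB" by auto
  have eq: "fsc c x - fsc c w = fsc c (x - w)" by (simp add: fv.scale_right_diff_distrib)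
  have "fsc c x - fsc c w \<in> tens_rel2 sA sB" unfolding eq by (rule rel_sc[OF a(2)])
  with a show "fsc c x \<in> {x. \<exists>w\<in>fspan G. x - w \<in> tens_rel2 sA sB}"
    by (auto simp: fspan_eq intro!: bexI[of _ "fsc c w"] fv.span_scale)
qed

lemma tmem2_add: "tmem2 sA sB x G \<Longrightarrow> tmem2 sA sB y G \<Longrightarrow> tmem2 sA sB (x + y) G"
  using tmem2_subspace[of sA sB G] fv.subspace_add by blast
lemma tmem2_sc: "tmem2 sA sB x G \<Longrightarrow> tmem2 sA sB (fsc c x) G"
  using tmem2_subspace[of sA sB G] fv.subspace_scale by blast

lemma tmem2_rel: "x - y \<in> tens_rel2 sA sB \<Longrightarrow> tmem2 sA sB y G \<Longrightarrow> tmem2 sA sB x G"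
proof -
  assume a: "x - y \<in> tens_rel2 sA sB" "tmem2 sA sB y G"
  then obtain w where "w \<in> fspan G" "y - w \<in> tens_rel2 sA sB" unfolding tmem2_def by auto
  moreover have "x - w = (x - y) + (y - w)" by simp
  ultimately show ?thesis using a unfolding tmem2_def by (metis rel_add)
qed

lemma tmem2_relI: "x \<in> tens_rel2 sA sB \<Longrightarrow> tmem2 sA sB x G"
  unfolding tmem2_def by (auto simp: fspan_eq intro!: bexI[of _ 0] fv.span_zero)

lemma tmem2_spanI: "x \<in> fspan G \<Longrightarrow> tmem2 sA sB x G"
  unfolding tmem2_def by (auto intro!: bexI[of _ x] rel_0)



lemma part1:
  fixes sH :: "'k::field \<Rightarrow> 'h::ab_group_add \<Rightarrow> 'h"
    and mult :: "'h \<Rightarrow> 'h \<Rightarrow> 'h" and one :: 'h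
    and Delta :: "'h \<Rightarrow> ('h \<times> 'h \<Rightarrow>\<^sub>0 'k)" and eps :: "'h \<Rightarrow> 'k" and S :: "'h \<Rightarrow> 'h"
    and Hf :: "nat \<Rightarrow> 'h set"
    and sV :: "'k \<Rightarrow> 'v::ab_group_add \<Rightarrow> 'v" and act :: "'h \<Rightarrow> 'v \<Rightarrow> 'v"
    and delta :: "'v \<Rightarrow> ('h \<times> 'v \<Rightarrow>\<^sub>0 'k)"
  assumes H: "hopf_algebra sH mult one Delta eps S"
    and filt: "hopf_filtration sH mult Delta eps S Hf"
    and YD: "yd_module sH mult one Delta eps S sV act delta"
  shows "v \<in> yd_filt sV act Hf (int i) \<Longrightarrow>
            tmem2 sH sV (delta v)
              {ft a w | a w k. a \<in> Hf k \<and> w \<in> yd_filt sV act Hf (int i - int k)}"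
proof -
  have m1: "\<And>a b c. mult (a + b) c = mult a c + mult b c"
   and m2: "\<And>a b c. mult a (b + c) = mult a b + mult a c"
   and m3: "\<And>r a b. mult (sH r a) b = sH r (mult a b)"
   and m4: "\<And>r a b. mult a (sH r b) = sH r (mult a b)"
   and Sadd: "\<And>a b. S (a + b) = S a + S b"
   and Ssc: "\<And>r a. S (sH r a) = sH r (S a)"
   and Dadd: "\<And>a b. teq2 sH sH (Delta (a + b)) (Delta a + Delta b)"
   and Dsc: "\<And>r a. teq2 sH sH (Delta (sH r a)) (fsc r (Delta a))"
    using H unfolding hopf_algebra_def by (elim conjE; simp)+
  have H0: "Hf 0 = UNIV"
   and fmult: "\<And>i j a b. a \<in> Hf i \<Longrightarrow> b \<in> Hf j \<Longrightarrow> mult a b \<in> Hf (i + j)"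
   and fD: "\<And>i h. h \<in> Hf i \<Longrightarrow>
        tmem2 sH sH (Delta h) {ft a b | a b j. j \<le> i \<and> a \<in> Hf j \<and> b \<in> Hf (i - j)}"
   and fS: "\<And>i h. 1 \<le> i \<Longrightarrow> h \<in> Hf i \<Longrightarrow> S h \<in> Hf i"
    using filt unfolding hopf_filtration_def by (elim conjE; simp)+
  have Vvs: "vector_space sV"
   and a1: "\<And>a b v. act (a + b) v = act a v + act b v"
   and a2: "\<And>a v w. act a (v + w) = act a v + act a w"
   and a3: "\<And>r a v. act (sH r a) v = sV r (act a v)"
   and a4: "\<And>r a v. act a (sV r v) = sV r (act a v)"
   and dadd: "\<And>v w. teq2 sH sV (delta (v + w)) (delta v + delta w)"
   and dsc: "\<And>r v. teq2 sH sV (delta (sV r v)) (fsc r (delta v))"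
   and ydc: "\<And>h v. teq2 sH sV (delta (act h v))
          (flift (\<lambda>(h1, h23). flift (\<lambda>(h2, h3).
              flift (\<lambda>(a, x). ft (mult (mult h1 a) (S h3)) (act h2 x)) fsc (delta v))
            fsc (Delta h23)) fsc (Delta h))"
    using YD unfolding yd_module_def by (elim conjE; simp)+
  interpret V: vector_space sV by (rule Vvs)
  define R where "R = tens_rel2 sH sV"
  have Rsub: "fv.subspace R" unfolding R_def by (rule tens_rel2_subspace)
  have gR1: "\<And>a a' b. ft (a + a') b - ft a b - ft a' b \<in> R" unfolding R_def by (rule rel2_gen1)
  have gR2: "\<And>a b b'. ft a (b + b') - ft a b - ft a b' \<in> R" unfolding R_def by (rule rel2_gen2)
  have gR3: "\<And>c a b. ft (sH c a) b - fsc c (ft a b) \<in> R" unfolding R_def by (rule rel2_gen3)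
  have gR4: "\<And>c a b. ft a (sV c b) - fsc c (ft a b) \<in> R" unfolding R_def by (rule rel2_gen4)
  define G :: "('h \<times> 'v \<Rightarrow>\<^sub>0 'k) set" where "G = {ft a w | a w k. a \<in> Hf k \<and> w \<in> yd_filt sV act Hf (int i - int k)}"
  have gen: "tmem2 sH sV (delta (act h u)) G" if hi: "h \<in> Hf i" for h u
  proof -
    define Psi where "Psi = (\<lambda>h1. \<lambda>(h2, h3). flift (\<lambda>(a, x). ft (mult (mult h1 a) (S h3)) (act h2 x)) fsc (delta u))"
    define Phi where "Phi = (\<lambda>(h1, h23). flift (Psi h1) fsc (Delta h23))"
    have yd: "delta (act h u) - flift Phi fsc (Delta h) \<in> R"
      using ydc[of h u] unfolding teq2_def Phi_def Psi_def R_def by simp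
    have psi_bil: "bil2 sH sH R (Psi h1)" for h1
      unfolding bil2_def
    proof (intro conjI allI)
      fix a a' b
      show "Psi h1 (a + a', b) - Psi h1 (a, b) - Psi h1 (a', b) \<in> R"
        unfolding Psi_def prod.case by (rule flift_combo3[OF Rsub]) (simp add: a1 gR2 split: prod.split)
    next
      fix a b b'
      show "Psi h1 (a, b + b') - Psi h1 (a, b) - Psi h1 (a, b') \<in> R"
        unfolding Psi_def prod.case by (rule flift_combo3[OF Rsub]) (simp add: Sadd m2 gR1 split: prod.split)
    next
      fix c a b
      show "Psi h1 (sH c a, b) - fsc c (Psi h1 (a, b)) \<in> R"
        unfolding Psi_def prod.case by (rule flift_combo_sc[OF Rsub]) (simp add: a3 gR4 split: prod.split)
    next
      fix c a b
      show "Psi h1 (a, sH c b) - fsc c (Psi h1 (a, b)) \<in> R"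
        unfolding Psi_def prod.case by (rule flift_combo_sc[OF Rsub]) (simp add: Ssc m4 gR3 split: prod.split)
    qed
    have phi_bil: "bil2 sH sH R Phi"
      unfolding bil2_def
    proof (intro conjI allI)
      fix a a' b
      show "Phi (a + a', b) - Phi (a, b) - Phi (a', b) \<in> R"
        unfolding Phi_def prod.case by (rule flift_combo3[OF Rsub]) (simp only: split_paired_all prod.case Psi_def, rule flift_combo3[OF Rsub], simp add: m1 gR1 split: prod.split)
    next
      fix a b b'
      have "Phi (a, b + b') - Phi (a, b) - Phi (a, b') = flift (Psi a) fsc (Delta (b + b') - (Delta b + Delta b'))"
        unfolding Phi_def by (simp add: flift_diff flift_add)
      also have "\<dots> \<in> R"
        using Dadd[of b b'] psi_bil Rsub flift_rel unfolding teq2_def by blast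
      finally show "Phi (a, b + b') - Phi (a, b) - Phi (a, b') \<in> R" .
    next
      fix c a b
      show "Phi (sH c a, b) - fsc c (Phi (a, b)) \<in> R"
        unfolding Phi_def prod.case by (rule flift_combo_sc[OF Rsub]) (simp only: split_paired_all prod.case Psi_def, rule flift_combo_sc[OF Rsub], simp add: m3 gR3 split: prod.split)
    next
      fix c a b
      have "Phi (a, sH c b) - fsc c (Phi (a, b)) = flift (Psi a) fsc (Delta (sH c b) - fsc c (Delta b))"
        unfolding Phi_def by (simp add: flift_diff flift_fsc)
      also have "\<dots> \<in> R"
        using Dsc[of c b] psi_bil Rsub flift_rel unfolding teq2_def by blast
      finally show "Phi (a, sH c b) - fsc c (Phi (a, b)) \<in> R" .
    qed
    have inG: "ft (mult (mult a e) (S d)) (act c x) \<in> G"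
      if "j \<le> i" "a \<in> Hf j" "m \<le> i - j" "c \<in> Hf m" "d \<in> Hf (i - j - m)" for j a m c d e x
    proof -
      have e0: "e \<in> Hf 0" using H0 by simp
      have ae: "mult a e \<in> Hf j" using fmult[OF that(2) e0] by simp
      have Sd: "S d \<in> Hf (i - j - m)"
      proof (cases "i - j - m = 0")
        case True then show ?thesis using H0 by simp
      next
        case False then have "1 \<le> i - j - m" by linarith
        then show ?thesis using fS that(5) by blast
      qed
      have p: "mult (mult a e) (S d) \<in> Hf (j + (i - j - m))" by (rule fmult[OF ae Sd])
      have eq: "j + (i - j - m) = i - m" using that(1,3) by arith
      have eq2: "int i - int (i - m) = int m" using that(1,3) by arith
      have "act c x \<in> V.span {act h v | h v. h \<in> Hf m}"
        by (rule V.span_base) (use that(4) in blast)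
      then have q: "act c x \<in> yd_filt sV act Hf (int i - int (i - m))"
        unfolding eq2 by (simp add: yd_filt_def)
      show ?thesis unfolding G_def using p q unfolding eq by blast
    qed
    have T: "fv.subspace {x. tmem2 sH sV x G}" by (rule tmem2_subspace)
    have main: "tmem2 sH sV (flift Phi fsc w) G"
      if "w \<in> fspan {ft a b | a b j. j \<le> i \<and> a \<in> Hf j \<and> b \<in> Hf (i - j)}" for w
    proof -
      have "flift Phi fsc w \<in> {x. tmem2 sH sV x G}"
      proof (rule linear_span_into[OF flift_add flift_fsc T])
        show "w \<in> fv.span {ft a b | a b j. j \<le> i \<and> a \<in> Hf j \<and> b \<in> Hf (i - j)}"
          using that by (simp add: fspan_eq)
      next
        fix g :: "'h \<times> 'h \<Rightarrow>\<^sub>0 'k" assume "g \<in> {ft a b | a b j. j \<le> i \<and> a \<in> Hf j \<and> b \<in> Hf (i - j)}"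
        then obtain a b j where g: "g = ft a b" "j \<le> i" "a \<in> Hf j" "b \<in> Hf (i - j)" by blast
        obtain w' where w': "w' \<in> fspan {ft c d | c d m. m \<le> i - j \<and> c \<in> Hf m \<and> d \<in> Hf (i - j - m)}"
          "Delta b - w' \<in> tens_rel2 sH sH"
          using fD[OF g(4)] unfolding tmem2_def by blast
        have eq: "flift Phi fsc g = flift (Psi a) fsc w' + flift (Psi a) fsc (Delta b - w')"
          unfolding g Phi_def by (simp add: flift_diff)
        have "flift (Psi a) fsc (Delta b - w') \<in> R"
          by (rule flift_rel[OF Rsub psi_bil w'(2)])
        then have t1: "tmem2 sH sV (flift (Psi a) fsc (Delta b - w')) G"
          unfolding R_def by (rule tmem2_relI)
        have "flift (Psi a) fsc w' \<in> fspan G"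
          unfolding fspan_eq
        proof (rule linear_span_into[OF flift_add flift_fsc fv.subspace_span])
          show "w' \<in> fv.span {ft c d | c d m. m \<le> i - j \<and> c \<in> Hf m \<and> d \<in> Hf (i - j - m)}"
            using w'(1) by (simp add: fspan_eq)
        next
          fix g' :: "'h \<times> 'h \<Rightarrow>\<^sub>0 'k" assume "g' \<in> {ft c d | c d m. m \<le> i - j \<and> c \<in> Hf m \<and> d \<in> Hf (i - j - m)}"
          then obtain c d m where g': "g' = ft c d" "m \<le> i - j" "c \<in> Hf m" "d \<in> Hf (i - j - m)" by blast
          show "flift (Psi a) fsc g' \<in> fv.span G"
            unfolding g' Psi_def flift_ft prod.case
            by (rule flift_in_subspace[OF fv.subspace_span]) (simp add: fv.span_base inG[OF g(2,3) g'(2,3,4)] split: prod.split)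
        qed
        then have t2: "tmem2 sH sV (flift (Psi a) fsc w') G" by (rule tmem2_spanI)
        show "flift Phi fsc g \<in> {x. tmem2 sH sV x G}"
          using tmem2_add[OF t2 t1] eq by simp
      qed
      then show ?thesis by simp
    qed
    obtain w where w: "w \<in> fspan {ft a b | a b j. j \<le> i \<and> a \<in> Hf j \<and> b \<in> Hf (i - j)}"
      "Delta h - w \<in> tens_rel2 sH sH"
      using fD[OF hi] unfolding tmem2_def by blast
    have "flift Phi fsc (Delta h) = flift Phi fsc w + flift Phi fsc (Delta h - w)"
      by (simp add: flift_diff)
    moreover have "tmem2 sH sV (flift Phi fsc (Delta h - w)) G"
      using flift_rel[OF Rsub phi_bil w(2)] unfolding R_def by (rule tmem2_relI)
    ultimately have "tmem2 sH sV (flift Phi fsc (Delta h)) G"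
      using tmem2_add[OF main[OF w(1)]] by simp
    then show ?thesis using yd unfolding R_def by (rule tmem2_rel[rotated])
  qed
  assume v: "v \<in> yd_filt sV act Hf (int i)"
  then have "v \<in> V.span {act h v | h v. h \<in> Hf i}" by (simp add: yd_filt_def)
  then have "tmem2 sH sV (delta v) G"
  proof (induction rule: V.span_induct_alt)
    case base
    have "delta (0 + 0) - (delta 0 + delta 0) \<in> tens_rel2 sH sV" using dadd unfolding teq2_def by blast
    then have "- delta 0 \<in> tens_rel2 sH sV" by simp
    then have "delta 0 \<in> tens_rel2 sH sV" using rel_diff[OF rel_0, of "- delta 0"] by simp
    then show ?case by (rule tmem2_relI)
  next
    case (step c x y)
    then obtain h u where x: "x = act h u" "h \<in> Hf i" by blast
    have "tmem2 sH sV (fsc c (delta x) + delta y) G"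
      using gen[OF x(2)] step.IH unfolding x(1) by (intro tmem2_add tmem2_sc)
    then have "tmem2 sH sV (delta (sV c x) + delta y) G"
      by (rule tmem2_rel[rotated]) (use dsc[of c x] in \<open>simp add: teq2_def\<close>)
    then show ?case
      by (rule tmem2_rel[rotated]) (use dadd[of "sV c x" y] in \<open>simp add: teq2_def\<close>)
  qed
  then show ?thesis unfolding G_def .
qed



lemma part2:
  fixes sH :: "'k::field \<Rightarrow> 'h::ab_group_add \<Rightarrow> 'h"
    and mult :: "'h \<Rightarrow> 'h \<Rightarrow> 'h" and one :: 'h
    and Delta :: "'h \<Rightarrow> ('h \<times> 'h \<Rightarrow>\<^sub>0 'k)" and eps :: "'h \<Rightarrow> 'k" and S :: "'h \<Rightarrow> 'h"
    and Hf :: "nat \<Rightarrow> 'h set" and n :: nat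
    and sV :: "'k \<Rightarrow> 'v::ab_group_add \<Rightarrow> 'v" and act :: "'h \<Rightarrow> 'v \<Rightarrow> 'v"
    and delta :: "'v \<Rightarrow> ('h \<times> 'v \<Rightarrow>\<^sub>0 'k)"
  assumes H: "hopf_algebra sH mult one Delta eps S"
    and filt: "hopf_filtration sH mult Delta eps S Hf"
    and Hn: "\<forall>i\<ge>n. Hf i = {0}"
    and YD: "yd_module sH mult one Delta eps S sV act delta"
  shows "braided_vs_filtration sV (yd_braiding act delta) (\<lambda>i. yd_filt sV act Hf (int i))"
proof -
  have H0: "Hf 0 = UNIV"
   and fmono: "\<And>i j. i \<le> j \<Longrightarrow> Hf j \<subseteq> Hf i"
   and fmult: "\<And>i j a b. a \<in> Hf i \<Longrightarrow> b \<in> Hf j \<Longrightarrow> mult a b \<in> Hf (i + j)"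
    using filt unfolding hopf_filtration_def by (elim conjE; simp)+
  have Vvs: "vector_space sV"
   and a1: "\<And>a b v. act (a + b) v = act a v + act b v"
   and a2: "\<And>a v w. act a (v + w) = act a v + act a w"
   and a3: "\<And>r a v. act (sH r a) v = sV r (act a v)"
   and a4: "\<And>r a v. act a (sV r v) = sV r (act a v)"
   and aone: "\<And>v. act one v = v"
   and amult: "\<And>a b v. act (mult a b) v = act a (act b v)"
    using YD unfolding yd_module_def by (elim conjE; simp)+
  interpret V: vector_space sV by (rule Vvs)
  define F where "F = (\<lambda>i. yd_filt sV act Hf (int i))"
  have Feq: "F i = V.span {act h v | h v. h \<in> Hf i}" for i
    by (simp add: F_def yd_filt_def)
  have act0: "act 0 v = 0" for v
    using a1[of 0 0 v] by simp
  have acta0: "act a 0 = 0" for a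
    using a2[of a 0 0] by simp
  have act_filt: "act a w \<in> F (k + j)" if "a \<in> Hf k" "w \<in> F j" for a w k j
  proof -
    have "w \<in> V.span {act h v | h v. h \<in> Hf j}" using that(2) Feq by simp
    then have "act a w \<in> V.span {act h v | h v. h \<in> Hf (k + j)}"
    proof (induction rule: V.span_induct_alt)
      case base then show ?case by (simp add: acta0 V.span_zero)
    next
      case (step c x y)
      then obtain h u where x: "x = act h u" "h \<in> Hf j" by blast
      have "act a x = act (mult a h) u" unfolding x amult ..
      moreover have "mult a h \<in> Hf (k + j)" by (rule fmult[OF that(1) x(2)])
      ultimately have "act a x \<in> V.span {act h v | h v. h \<in> Hf (k + j)}"
        by (intro V.span_base) blast
      then show ?case using step.IH
        by (simp add: a2 a4 V.span_add V.span_scale)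
    qed
    then show ?thesis using Feq by simp
  qed
  have F0: "F 0 = UNIV"
  proof -
    have "v \<in> V.span {act h v | h v. h \<in> Hf 0}" for v
      by (rule V.span_base) (metis (mono_tags, lifting) H0 UNIV_I aone mem_Collect_eq)
    then show ?thesis using Feq by auto
  qed
  have part1': "\<And>i v. v \<in> F i \<Longrightarrow> tmem2 sH sV (delta v)
              {ft a w | a w k. a \<in> Hf k \<and> w \<in> yd_filt sV act Hf (int i - int k)}"
    unfolding F_def by (rule part1[OF H filt YD])
  have braid: "tmem2 sV sV (yd_braiding act delta x)
         {ft v w | v w k l. i + j \<le> k + l \<and> v \<in> F k \<and> w \<in> F l}"
    if x: "x \<in> fspan {ft v w | v w. v \<in> F i \<and> w \<in> F j}" for i j x
  proof -
    define Gc :: "('v \<times> 'v \<Rightarrow>\<^sub>0 'k) set" where "Gc = {ft v w | v w k l. i + j \<le> k + l \<and> v \<in> F k \<and> w \<in> F l}"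
    have "yd_braiding act delta x \<in> {y. tmem2 sV sV y Gc}"
      unfolding yd_braiding_def
    proof (rule linear_span_into[OF flift_add flift_fsc tmem2_subspace])
      show "x \<in> fv.span {ft v w | v w. v \<in> F i \<and> w \<in> F j}" using x by (simp add: fspan_eq)
    next
      fix g :: "'v \<times> 'v \<Rightarrow>\<^sub>0 'k" assume "g \<in> {ft v w | v w. v \<in> F i \<and> w \<in> F j}"
      then obtain v w where g: "g = ft v w" "v \<in> F i" "w \<in> F j" by blast
      obtain z where z: "z \<in> fspan {ft a y | a y k. a \<in> Hf k \<and> y \<in> yd_filt sV act Hf (int i - int k)}"
        "delta v - z \<in> tens_rel2 sH sV"
        using part1'[OF g(2)] unfolding tmem2_def by blast
      define Lam :: "('h \<times> 'v \<Rightarrow>\<^sub>0 'k) \<Rightarrow> ('v \<times> 'v \<Rightarrow>\<^sub>0 'k)" where "Lam = flift (\<lambda>(a, y). ft (act a w) y) fsc"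
      have eq: "flift (\<lambda>(v, w). flift (\<lambda>(a, y). ft (act a w) y) fsc (delta v)) fsc g
          = Lam z + Lam (delta v - z)"
        unfolding g Lam_def by (simp add: flift_diff)
      have bl: "bil2 sH sV (tens_rel2 sV sV) (\<lambda>(a, y). ft (act a w) y)"
        using bil_ft[where A="\<lambda>a. act a w" and B="\<lambda>y. y" and sA=sH and sB=sV and sC=sV and sD=sV]
        by (simp add: a1 a3)
      have t1: "tmem2 sV sV (Lam (delta v - z)) Gc"
        unfolding Lam_def by (rule tmem2_relI, rule flift_rel[OF tens_rel2_subspace bl z(2)])
      have "Lam z \<in> fv.span Gc"
        unfolding Lam_def
      proof (rule linear_span_into[OF flift_add flift_fsc fv.subspace_span])
        show "z \<in> fv.span {ft a y | a y k. a \<in> Hf k \<and> y \<in> yd_filt sV act Hf (int i - int k)}"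
          using z(1) by (simp add: fspan_eq)
      next
        fix g' :: "'h \<times> 'v \<Rightarrow>\<^sub>0 'k"
        assume "g' \<in> {ft a y | a y k. a \<in> Hf k \<and> y \<in> yd_filt sV act Hf (int i - int k)}"
        then obtain a y k where g': "g' = ft a y" "a \<in> Hf k" "y \<in> yd_filt sV act Hf (int i - int k)" by blast
        have aw: "act a w \<in> F (k + j)" by (rule act_filt[OF g'(2) g(3)])
        have yF: "y \<in> F (i - k)"
        proof (cases "k \<le> i")
          case True
          then have eq: "int i - int k = int (i - k)" by (simp add: of_nat_diff)
          have "F (i - k) = yd_filt sV act Hf (int i - int k)" unfolding eq F_def ..
          then show ?thesis using g'(3) by simp
        next
          case False
          then have "i - k = 0" by simp
          then show ?thesis using F0 by simp
        qed
        have "i + j \<le> (k + j) + (i - k)" by simp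
        then have "ft (act a w) y \<in> Gc" unfolding Gc_def
          by (intro CollectI exI[of _ "act a w"] exI[of _ y] exI[of _ "k + j"] exI[of _ "i - k"]) (simp add: aw yF)
        then show "flift (\<lambda>(a, y). ft (act a w) y) fsc g' \<in> fv.span Gc"
          unfolding g' by (simp add: fv.span_base)
      qed
      then have t2: "tmem2 sV sV (Lam z) Gc" by (simp add: tmem2_spanI fspan_eq)
      show "flift (\<lambda>(v, w). flift (\<lambda>(a, y). ft (act a w) y) fsc (delta v)) fsc g \<in> {y. tmem2 sV sV y Gc}"
        unfolding eq using tmem2_add[OF t2 t1] by simp
    qed
    then show ?thesis unfolding Gc_def by simp
  qed
  have sub0: "V.subspace {0}" unfolding V.subspace_def by simp
  have inter: "(\<Inter>i. F i) = {0}"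
  proof
    have "{act h v | h v. h \<in> Hf n} \<subseteq> {0}" using Hn act0 by auto
    then have "F n \<subseteq> {0}" unfolding Feq using V.span_minimal[OF _ sub0] by blast
    then show "(\<Inter>i. F i) \<subseteq> {0}" by blast
  next
    show "{0} \<subseteq> (\<Inter>i. F i)" by (simp add: Feq V.span_zero)
  qed
  show ?thesis
    unfolding braided_vs_filtration_def F_def[symmetric]
  proof (intro conjI allI impI ballI)
    fix i show "V.subspace (F i)" unfolding Feq by (rule V.subspace_span)
  next
    show "F 0 = UNIV" by (rule F0)
  next
    fix k l :: nat assume "k \<le> l"
    then show "F l \<subseteq> F k" unfolding Feq by (intro V.span_mono) (use fmono in blast)
  next
    show "(\<Inter>i. F i) = {0}" by (rule inter)
  next
    fix i j and x :: "'v \<times> 'v \<Rightarrow>\<^sub>0 'k" assume "x \<in> fspan {ft v w | v w. v \<in> F i \<and> w \<in> F j}"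
    then show "tmem2 sV sV (yd_braiding act delta x)
         {ft v w | v w k l. i + j \<le> k + l \<and> v \<in> F k \<and> w \<in> F l}" by (rule braid)
  qed
qed

theorem mainTheorem12:
  fixes sH :: "'k::field \<Rightarrow> 'h::ab_group_add \<Rightarrow> 'h"
    and mult :: "'h \<Rightarrow> 'h \<Rightarrow> 'h" and one :: 'h
    and Delta :: "'h \<Rightarrow> ('h \<times> 'h \<Rightarrow>\<^sub>0 'k)" and eps :: "'h \<Rightarrow> 'k" and S :: "'h \<Rightarrow> 'h"
    and Hf :: "nat \<Rightarrow> 'h set" and n :: nat
    and sV :: "'k \<Rightarrow> 'v::ab_group_add \<Rightarrow> 'v" and act :: "'h \<Rightarrow> 'v \<Rightarrow> 'v"
    and delta :: "'v \<Rightarrow> ('h \<times> 'v \<Rightarrow>\<^sub>0 'k)"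
  assumes H: "hopf_algebra sH mult one Delta eps S"
    and S_bij: "bij S"
    and filt: "hopf_filtration sH mult Delta eps S Hf"
    and Hn: "\<forall>i\<ge>n. Hf i = {0}"
    and YD: "yd_module sH mult one Delta eps S sV act delta"
  shows "(\<forall>i::nat. \<forall>v \<in> yd_filt sV act Hf (int i).
            tmem2 sH sV (delta v)
              {ft a w | a w k. a \<in> Hf k \<and> w \<in> yd_filt sV act Hf (int i - int k)})
       \<and> braided_vs_filtration sV (yd_braiding act delta) (\<lambda>i. yd_filt sV act Hf (int i))"
proof (intro conjI allI ballI)
  fix i :: nat and v assume "v \<in> yd_filt sV act Hf (int i)"
  then show "tmem2 sH sV (delta v)
              {ft a w | a w k. a \<in> Hf k \<and> w \<in> yd_filt sV act Hf (int i - int k)}"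
    by (rule part1[OF H filt YD])
next
  show "braided_vs_filtration sV (yd_braiding act delta) (\<lambda>i. yd_filt sV act Hf (int i))"
    by (rule part2[OF H filt Hn YD])
qed

end
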